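(* Let $f$ be a probability density on $(x_i,x_f)$, $-\infty<x_i<x_f\le\infty$, differentiable with $f'(x)<0$ on $(x_i,x_f)$, and let $\kappa>0$. If $\alpha\in\mathbb{R}\setminus\{2\}$, then $\mathcal{D}_\alpha[f^{[\kappa]}](s)=\big(\mathcal{D}_\alpha[f]\big)^{[\kappa^{\alpha-2}]}(s)$. If $\alpha=2$, then $\mathcal{D}_2[f^{[\kappa]}](s)=\mathcal{D}_2[f](s+\ln\kappa)$.
   Context: For $\kappa>0$ and a function $h$, $h^{[\kappa]}(x)=\kappa\,h(\kappa x)$. Down transform: for a density $f$ on $(x_i,x_f)$ with $f'<0$ and $\alpha\in\mathbb{R}$, $\mathcal{D}_\alpha[f](s)=f(x(s))^\alpha\,|f'(x(s))|^{-1}$, where $x(s)$ is the inverse of the change of variable $s(x)=f(x)^{2-\alpha}/(\alpha-2)$ if $\alpha\neq2$, and $s(x)=-\ln f(x)$ if $\alpha=2$ (in both cases $s'(x)=f^{1-\alpha}(x)|f'(x)|$). *)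

theory Defs
  imports "HOL-Analysis.Analysis"
begin

definition rescale :: "real \<Rightarrow> (real \<Rightarrow> real) \<Rightarrow> real \<Rightarrow> real" where
  "rescale \<kappa> h x = \<kappa> * h (\<kappa> * x)"

definition down_var :: "real \<Rightarrow> (real \<Rightarrow> real) \<Rightarrow> real \<Rightarrow> real" where
  "down_var \<alpha> f x = (if \<alpha> = 2 then - ln (f x) else f x powr (2 - \<alpha>) / (\<alpha> - 2))"

definition down_transform :: "real \<Rightarrow> (real \<Rightarrow> real) \<Rightarrow> real set \<Rightarrow> real \<Rightarrow> real" where
  "down_transform \<alpha> f I s =
     (let x = inv_into I (down_var \<alpha> f) s in f x powr \<alpha> / \<bar>deriv f x\<bar>)"

definition ivl :: "real \<Rightarrow> ereal \<Rightarrow> real set" where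
  "ivl a b = {x. a < x \<and> ereal x < b}"

end

theory Submission
  imports Defs
begin

lemma ereal_lt_div_iff:
  fixes x :: ereal and k y :: real
  assumes "k > 0"
  shows "ereal y < x / ereal k \<longleftrightarrow> ereal (k * y) < x"
  using assms
proof (cases x)
  case (real r)
  then show ?thesis using assms by (simp add: pos_less_divide_eq mult.commute)
qed (auto)

lemma ivl_scale:
  assumes "k > 0"
  shows "y \<in> ivl (a / k) (b / ereal k) \<longleftrightarrow> k * y \<in> ivl a b"
  using assms by (simp add: ivl_def ereal_lt_div_iff pos_divide_less_eq mult.commute)

theorem proposition1:
  fixes f :: "real \<Rightarrow> real" and x\<^sub>i :: real and x\<^sub>f :: ereal and \<kappa> \<alpha> :: real
  assumes "ereal x\<^sub>i < x\<^sub>f"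
    and nonneg: "\<forall>x\<in>ivl x\<^sub>i x\<^sub>f. 0 \<le> f x"
    and density: "(f has_integral 1) (ivl x\<^sub>i x\<^sub>f)"
    and diff: "\<forall>x\<in>ivl x\<^sub>i x\<^sub>f. f differentiable (at x)"
    and decr: "\<forall>x\<in>ivl x\<^sub>i x\<^sub>f. deriv f x < 0"
    and "\<kappa> > 0"
  shows "(\<alpha> \<noteq> 2 \<longrightarrow>
            (\<forall>s \<in> down_var \<alpha> (rescale \<kappa> f) ` ivl (x\<^sub>i / \<kappa>) (x\<^sub>f / ereal \<kappa>).
               down_transform \<alpha> (rescale \<kappa> f) (ivl (x\<^sub>i / \<kappa>) (x\<^sub>f / ereal \<kappa>)) s
               = rescale (\<kappa> powr (\<alpha> - 2)) (down_transform \<alpha> f (ivl x\<^sub>i x\<^sub>f)) s))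
       \<and> (\<alpha> = 2 \<longrightarrow>
            (\<forall>s \<in> down_var 2 (rescale \<kappa> f) ` ivl (x\<^sub>i / \<kappa>) (x\<^sub>f / ereal \<kappa>).
               down_transform 2 (rescale \<kappa> f) (ivl (x\<^sub>i / \<kappa>) (x\<^sub>f / ereal \<kappa>)) s
               = down_transform 2 f (ivl x\<^sub>i x\<^sub>f) (s + ln \<kappa>)))"
proof -
  define I where "I = ivl x\<^sub>i x\<^sub>f"
  define J where "J = ivl (x\<^sub>i / \<kappa>) (x\<^sub>f / ereal \<kappa>)"
  define g where "g = rescale \<kappa> f"
  have kp: "\<kappa> > 0" by fact
  have memJ: "y \<in> J \<longleftrightarrow> \<kappa> * y \<in> I" for y
    unfolding I_def J_def using ivl_scale[OF kp] by blast
  have conv: "x \<in> I" if "a \<in> I" "b \<in> I" "a \<le> x" "x \<le> b" for a b x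
    using that unfolding I_def ivl_def
    by (metis (mono_tags, lifting) ereal_less_eq(3) le_less_trans mem_Collect_eq order_less_le_trans)
  have fdec: "f b < f a" if "a \<in> I" "b \<in> I" "a < b" for a b
  proof (rule DERIV_neg_imp_decreasing[OF \<open>a < b\<close>])
    fix x assume "a \<le> x" "x \<le> b"
    then have "x \<in> I" using conv that by blast
    then show "\<exists>y. DERIV f x :> y \<and> y < 0"
      using diff decr unfolding I_def
      by (metis DERIV_deriv_iff_real_differentiable)
  qed
  have injf: "inj_on f I"
    by (rule inj_onI) (metis fdec linorder_neqE_linordered_idom less_irrefl)
  have fpos: "f x > 0" if "x \<in> I" for x
  proof -
    from that have "ereal x < x\<^sub>f" "x\<^sub>i < x" unfolding I_def ivl_def by auto
    then obtain z where z: "x < z" "ereal z < x\<^sub>f"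
      by (metis ereal_dense2 ereal_less(2) less_ereal.simps(1) order.strict_trans)
    then have "z \<in> I" using \<open>x\<^sub>i < x\<close> unfolding I_def ivl_def by auto
    then have "f z < f x" using fdec that z by blast
    moreover have "f z \<ge> 0" using nonneg \<open>z \<in> I\<close> unfolding I_def by blast
    ultimately show ?thesis by linarith
  qed
  have gval: "g y = \<kappa> * f (\<kappa> * y)" for y unfolding g_def rescale_def by simp
  have dg: "deriv g y = \<kappa> * \<kappa> * deriv f (\<kappa> * y)" if "y \<in> J" for y
  proof -
    have "\<kappa> * y \<in> I" using that memJ by blast
    then have "DERIV f (\<kappa> * y) :> deriv f (\<kappa> * y)"
      using diff unfolding I_def by (metis DERIV_deriv_iff_real_differentiable)
    then have "DERIV (\<lambda>y. f (\<kappa> * y)) y :> deriv f (\<kappa> * y) * \<kappa>"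
      by (rule DERIV_chain2) (auto intro!: derivative_eq_intros)
    then have "DERIV g y :> \<kappa> * (deriv f (\<kappa> * y) * \<kappa>)"
      unfolding g_def rescale_def by (rule DERIV_cmult)
    then show ?thesis by (simp add: DERIV_imp_deriv)
  qed
  have part1: "\<forall>s \<in> down_var \<alpha> g ` J.
      down_transform \<alpha> g J s = rescale (\<kappa> powr (\<alpha> - 2)) (down_transform \<alpha> f I) s"
    if an: "\<alpha> \<noteq> 2"
  proof
    fix s assume "s \<in> down_var \<alpha> g ` J"
    then obtain y0 where y0: "y0 \<in> J" "s = down_var \<alpha> g y0" by auto
    have svar: "down_var \<alpha> g y = \<kappa> powr (2-\<alpha>) * down_var \<alpha> f (\<kappa> * y)" if "y \<in> J" for y
      using an kp fpos[of "\<kappa>*y"] that memJ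
      by (simp add: down_var_def gval powr_mult)
    have injdf: "inj_on (down_var \<alpha> f) I"
    proof (rule inj_onI)
      fix x x' assume xx: "x \<in> I" "x' \<in> I" "down_var \<alpha> f x = down_var \<alpha> f x'"
      then have "f x powr (2-\<alpha>) = f x' powr (2-\<alpha>)" using an by (simp add: down_var_def)
      then have "(f x powr (2-\<alpha>)) powr (1/(2-\<alpha>)) = (f x' powr (2-\<alpha>)) powr (1/(2-\<alpha>))" by simp
      then have "\<bar>f x\<bar> = \<bar>f x'\<bar>" using an fpos xx by (simp add: powr_powr)
      then have "f x = f x'" using fpos[OF xx(1)] fpos[OF xx(2)] by simp
      then show "x = x'" using injf xx by (meson inj_onD)
    qed
    have injdg: "inj_on (down_var \<alpha> g) J"
    proof (rule inj_onI)
      fix y y' assume yy: "y \<in> J" "y' \<in> J" "down_var \<alpha> g y = down_var \<alpha> g y'"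
      then have "down_var \<alpha> f (\<kappa> * y) = down_var \<alpha> f (\<kappa> * y')" using svar kp by simp
      then have "\<kappa> * y = \<kappa> * y'" using injdf yy memJ by (meson inj_onD)
      then show "y = y'" using kp by simp
    qed
    have inv1: "inv_into J (down_var \<alpha> g) s = y0"
      using inv_into_f_eq[OF injdg y0(1)] y0 by simp
    have kk: "\<kappa> powr (\<alpha> - 2) * \<kappa> powr (2 - \<alpha>) = 1"
      using kp by (simp add: powr_add[symmetric])
    have "down_var \<alpha> f (\<kappa> * y0) = \<kappa> powr (\<alpha> - 2) * s"
      using y0 svar kk by (simp add: mult.assoc[symmetric])
    then have inv2: "inv_into I (down_var \<alpha> f) (\<kappa> powr (\<alpha> - 2) * s) = \<kappa> * y0"
      using inv_into_f_eq[OF injdf] y0 memJ by blast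
    have fp: "f (\<kappa> * y0) > 0" using fpos memJ y0 by blast
    have kpow: "\<kappa> powr (\<alpha> - 2) = \<kappa> powr \<alpha> / (\<kappa> * \<kappa>)"
      using kp by (simp add: powr_diff power2_eq_square)
    show "down_transform \<alpha> g J s = rescale (\<kappa> powr (\<alpha> - 2)) (down_transform \<alpha> f I) s"
      unfolding down_transform_def rescale_def Let_def inv1 inv2
      using fp kp dg[OF y0(1)] kpow
      by (simp add: gval powr_mult abs_mult)
  qed
  have part2: "\<forall>s \<in> down_var 2 g ` J.
      down_transform 2 g J s = down_transform 2 f I (s + ln \<kappa>)"
  proof
    fix s assume "s \<in> down_var 2 g ` J"
    then obtain y0 where y0: "y0 \<in> J" "s = down_var 2 g y0" by auto
    have svar: "down_var 2 g y = down_var 2 f (\<kappa> * y) - ln \<kappa>" if "y \<in> J" for y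
      using kp fpos[of "\<kappa>*y"] that memJ
      by (simp add: down_var_def gval ln_mult)
    have injdf: "inj_on (down_var 2 f) I"
    proof (rule inj_onI)
      fix x x' assume xx: "x \<in> I" "x' \<in> I" "down_var 2 f x = down_var 2 f x'"
      then have "f x = f x'" using fpos by (simp add: down_var_def)
      then show "x = x'" using injf xx by (meson inj_onD)
    qed
    have injdg: "inj_on (down_var 2 g) J"
    proof (rule inj_onI)
      fix y y' assume yy: "y \<in> J" "y' \<in> J" "down_var 2 g y = down_var 2 g y'"
      then have "down_var 2 f (\<kappa> * y) = down_var 2 f (\<kappa> * y')" using svar by simp
      then have "\<kappa> * y = \<kappa> * y'" using injdf yy memJ by (meson inj_onD)
      then show "y = y'" using kp by simp
    qed
    have inv1: "inv_into J (down_var 2 g) s = y0"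
      using inv_into_f_eq[OF injdg y0(1)] y0 by simp
    have "down_var 2 f (\<kappa> * y0) = s + ln \<kappa>"
      using y0 svar by simp
    then have inv2: "inv_into I (down_var 2 f) (s + ln \<kappa>) = \<kappa> * y0"
      using inv_into_f_eq[OF injdf] y0 memJ by blast
    have fp: "f (\<kappa> * y0) > 0" using fpos memJ y0 by blast
    show "down_transform 2 g J s = down_transform 2 f I (s + ln \<kappa>)"
      unfolding down_transform_def Let_def inv1 inv2
      using fp kp dg[OF y0(1)]
      by (simp add: gval powr_mult abs_mult power2_eq_square)
  qed
  show ?thesis using part1 part2 unfolding I_def J_def g_def by blast
qed

end
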